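(* Suppose the neighbor graph $\mathbb N$ (no self-arcs, $m\ge2$ vertices) is strongly connected and let $\mathrm D$ be an ear decomposition of $\mathbb N$. If $\max_{\mathbb E\in\mathrm D} l(\mathbb E)\le n$, where $l(\mathbb E)$ is the number of arcs of the ear $\mathbb E$, then there exist matrices $C_{ji}$ (one per arc $(j,i)$ of $\mathbb N$, each with $n$ columns) with $\ker C_{ji}\ne0$ for every arc such that $\bar{\mathbb N}$ is well-configured.
   Context: Setup: $m$ agents labeled $1,\dots,m$ with states $x_i\in\mathbb R^n$; neighbor graph $\mathbb N$ is a directed graph on $\{1,\dots,m\}$ without self-arcs; each arc $(j,i)$ carries a real matrix $C_{ji}$ with $n$ columns; $\bar{\mathbb N}$ denotes $\mathbb N$ with these matrices. $\bar{\mathbb N}$ is well-configured if for all $x_1,\dots,x_m\in\mathbb R^n$, $C_{ji}x_i=C_{ji}x_j$ for every arc $(j,i)$ implies $x_1=\cdots=x_m$. A directed path is a subgraph with distinct vertices $v_0,\dots,v_k$ ($k\ge1$) and arcs $(v_{r-1},v_r)$; its end-vertices are $v_0,v_k$. A directed cycle is a subgraph with distinct vertices $v_1,\dots,v_k$ ($k\ge 2$) and arcs $(v_r,v_{r+1})$, $r<k$, and $(v_k,v_1)$. An ear decomposition of a directed graph $\mathbb G$ is a sequence of subgraphs $\mathbb E_0,\dots,\mathbb E_p$ such that $\mathbb E_0$ is a directed cycle, each $\mathbb E_i$ ($i\ge1$) is a directed path or directed cycle, the $\mathbb E_i$ are pairwise arc-disjoint with union $\mathbb G$, and for $i\ge1$: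 a cycle $\mathbb E_i$ has exactly one vertex in common with $\bigcup_{k<i}\mathbb E_k$, and a path $\mathbb E_i$ has its two end-vertices as the only vertices in common with $\bigcup_{k<i}\mathbb E_k$. The $\mathbb E_i$ are called ears. *)

theory Defs
  imports "Jordan_Normal_Form.Matrix"
begin

text \<open>A (sub)graph is a pair (vertex set, arc set); an arc (j,i) goes from j to i.\<close>
type_synonym graph = "nat set \<times> (nat \<times> nat) set"

definition is_dpath_of :: "nat list \<Rightarrow> graph \<Rightarrow> bool" where
  "is_dpath_of vs H \<longleftrightarrow> distinct vs \<and> length vs \<ge> 2 \<and> fst H = set vs \<and>
     snd H = {(vs ! r, vs ! (Suc r)) | r. Suc r < length vs}"

definition is_dcycle_of :: "nat list \<Rightarrow> graph \<Rightarrow> bool" where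
  "is_dcycle_of vs H \<longleftrightarrow> distinct vs \<and> length vs \<ge> 2 \<and> fst H = set vs \<and>
     snd H = {(vs ! r, vs ! (Suc r)) | r. Suc r < length vs} \<union> {(last vs, hd vs)}"

definition is_dpath :: "graph \<Rightarrow> bool" where
  "is_dpath H \<longleftrightarrow> (\<exists>vs. is_dpath_of vs H)"

definition is_dcycle :: "graph \<Rightarrow> bool" where
  "is_dcycle H \<longleftrightarrow> (\<exists>vs. is_dcycle_of vs H)"

definition prev_verts :: "graph list \<Rightarrow> nat \<Rightarrow> nat set" where
  "prev_verts D i = (\<Union>k<i. fst (D ! k))"

definition ear_decomposition :: "nat set \<Rightarrow> (nat \<times> nat) set \<Rightarrow> graph list \<Rightarrow> bool" where
  "ear_decomposition V A D \<longleftrightarrow>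
     D \<noteq> [] \<and>
     is_dcycle (D ! 0) \<and>
     (\<forall>i<length D. i \<ge> 1 \<longrightarrow> is_dpath (D ! i) \<or> is_dcycle (D ! i)) \<and>
     (\<forall>i<length D. \<forall>k<length D. i \<noteq> k \<longrightarrow> snd (D ! i) \<inter> snd (D ! k) = {}) \<and>
     (\<Union>i<length D. fst (D ! i)) = V \<and>
     (\<Union>i<length D. snd (D ! i)) = A \<and>
     (\<forall>i<length D. i \<ge> 1 \<longrightarrow>
        (is_dcycle (D ! i) \<longrightarrow> card (fst (D ! i) \<inter> prev_verts D i) = 1) \<and>
        (\<forall>vs. is_dpath_of vs (D ! i) \<longrightarrow>
               fst (D ! i) \<inter> prev_verts D i = {hd vs, last vs}))"

definition ear_length :: "graph \<Rightarrow> nat" where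
  "ear_length E = card (snd E)"

definition strongly_connected :: "nat set \<Rightarrow> (nat \<times> nat) set \<Rightarrow> bool" where
  "strongly_connected V A \<longleftrightarrow> (\<forall>i\<in>V. \<forall>j\<in>V. (i, j) \<in> A\<^sup>*)"

definition well_configured ::
    "nat \<Rightarrow> nat set \<Rightarrow> (nat \<times> nat) set \<Rightarrow> (nat \<times> nat \<Rightarrow> real mat) \<Rightarrow> bool" where
  "well_configured n V A C \<longleftrightarrow>
     (\<forall>x :: nat \<Rightarrow> real vec. (\<forall>i\<in>V. x i \<in> carrier_vec n) \<longrightarrow>
        (\<forall>(j, i)\<in>A. C (j, i) *\<^sub>v x i = C (j, i) *\<^sub>v x j) \<longrightarrow>
        (\<forall>i\<in>V. \<forall>j\<in>V. x i = x j))"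

end

theory Submission
  imports Defs
begin

lemma chain_eq:
  assumes "\<And>t. a \<le> t \<Longrightarrow> t < b \<Longrightarrow> f t = f (Suc t)" "a \<le> b"
  shows "f a = (f b :: real)"
  using assms
proof (induction b)
  case 0 then show ?case by simp
next
  case (Suc b)
  show ?case
  proof (cases "a = Suc b")
    case False
    then have "f a = f b" using Suc by auto
    also have "\<dots> = f (Suc b)" using Suc False by auto
    finally show ?thesis .
  qed simp
qed

lemma cycle_const:
  fixes y :: "nat \<Rightarrow> real"
  assumes len: "length vs \<ge> 2"
  and g1: "\<And>t. Suc t < length vs \<Longrightarrow> t \<noteq> s \<Longrightarrow> y (vs ! t) = y (vs ! Suc t)"
  and g2: "s \<noteq> length vs - 1 \<Longrightarrow> y (last vs) = y (hd vs)"
  and r: "r < length vs"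
  shows "y (vs ! r) = y (vs ! 0)"
proof (cases "r \<le> s")
  case True
  have "y (vs ! 0) = y (vs ! r)"
    by (rule chain_eq[where f="\<lambda>t. y (vs ! t)"]) (use True r g1 in auto)
  then show ?thesis by simp
next
  case False
  have "y (vs ! r) = y (vs ! (length vs - 1))"
    by (rule chain_eq[where f="\<lambda>t. y (vs ! t)"]) (use False r g1 in auto)
  also have "\<dots> = y (last vs)" using len by (subst last_conv_nth) auto
  also have "\<dots> = y (hd vs)" using g2 False r by auto
  also have "\<dots> = y (vs ! 0)" using len by (subst hd_conv_nth) auto
  finally show ?thesis .
qed

lemma path_const:
  fixes y :: "nat \<Rightarrow> real"
  assumes len: "length vs \<ge> 2"
  and g1: "\<And>t. Suc t < length vs \<Longrightarrow> t \<noteq> s \<Longrightarrow> y (vs ! t) = y (vs ! Suc t)"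
  and g2: "y (last vs) = y (hd vs)"
  and r: "r < length vs"
  shows "y (vs ! r) = y (vs ! 0)"
  by (rule cycle_const[OF len g1 g2 r]) (use g1 g2 in auto)

lemma prev_verts_Suc: "prev_verts D (Suc i) = prev_verts D i \<union> fst (D ! i)"
  unfolding prev_verts_def by (auto simp: lessThan_Suc)

lemma ears_const:
  fixes y :: "nat \<Rightarrow> real"
  assumes ed: "ear_decomposition V A D"
  and L: "\<And>k. k < length D \<Longrightarrow> (if is_dcycle (D!k) then is_dcycle_of (L k) (D!k) else is_dpath_of (L k) (D!k))"
  and g1: "\<And>k t. k < length D \<Longrightarrow> Suc t < length (L k) \<Longrightarrow> t \<noteq> s \<Longrightarrow> y (L k ! t) = y (L k ! Suc t)"
  and g2: "\<And>k. k < length D \<Longrightarrow> is_dcycle (D!k) \<Longrightarrow> s \<noteq> length (L k) - 1 \<Longrightarrow> y (last (L k)) = y (hd (L k))"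
  shows "i \<le> length D \<Longrightarrow> \<exists>c. \<forall>u\<in>prev_verts D i. y u = c"
proof (induction i)
  case 0 then show ?case by (simp add: prev_verts_def)
next
  case (Suc i)
  then have i: "i < length D" by simp
  let ?vs = "L i"
  have allv: "\<forall>u \<in> fst (D ! i). y u = y (?vs ! 0)"
    and hdlast: "\<not> is_dcycle (D ! i) \<Longrightarrow> i \<ge> 1 \<Longrightarrow> fst (D ! i) \<inter> prev_verts D i = {hd ?vs, last ?vs}"
  proof -
    show "\<not> is_dcycle (D ! i) \<Longrightarrow> i \<ge> 1 \<Longrightarrow> fst (D ! i) \<inter> prev_verts D i = {hd ?vs, last ?vs}"
    proof -
      assume nc: "\<not> is_dcycle (D ! i)" and i1: "i \<ge> 1"
      then have p: "is_dpath_of ?vs (D ! i)" using L[OF i] by simp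
      then show ?thesis using ed i i1 unfolding ear_decomposition_def by auto
    qed
    show "\<forall>u \<in> fst (D ! i). y u = y (?vs ! 0)"
    proof (cases "is_dcycle (D ! i)")
      case True
      then have c: "is_dcycle_of ?vs (D ! i)" using L[OF i] by simp
      show ?thesis
      proof
        fix u assume "u \<in> fst (D ! i)"
        then obtain r where r: "r < length ?vs" "u = ?vs ! r" using c
          by (auto simp: is_dcycle_of_def in_set_conv_nth)
        show "y u = y (?vs ! 0)" unfolding r(2)
          by (rule cycle_const[OF _ _ _ r(1), where s=s]) (use c g1[OF i] g2[OF i True] in \<open>auto simp: is_dcycle_of_def\<close>)
      qed
    next
      case False
      then have p: "is_dpath_of ?vs (D ! i)" using L[OF i] by simp
      have "i \<noteq> 0" using ed False unfolding ear_decomposition_def by (cases "i = 0") auto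
      then have e: "fst (D ! i) \<inter> prev_verts D i = {hd ?vs, last ?vs}"
        using p ed i unfolding ear_decomposition_def by auto
      obtain c where cc: "\<forall>u\<in>prev_verts D i. y u = c" using Suc by auto
      have "hd ?vs \<in> prev_verts D i" "last ?vs \<in> prev_verts D i" using e by blast+
      then have "y (last ?vs) = y (hd ?vs)" using cc by simp
      show ?thesis
      proof
        fix u assume "u \<in> fst (D ! i)"
        then obtain r where r: "r < length ?vs" "u = ?vs ! r" using p
          by (auto simp: is_dpath_of_def in_set_conv_nth)
        show "y u = y (?vs ! 0)" unfolding r(2)
          by (rule path_const[OF _ _ _ r(1), where s=s]) (use p g1[OF i] \<open>y (last ?vs) = y (hd ?vs)\<close> in \<open>auto simp: is_dpath_of_def\<close>)
      qed
    qed
  qed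
  show ?case
  proof (cases "i = 0")
    case True
    then show ?thesis using allv by (auto simp: prev_verts_Suc prev_verts_def)
  next
    case False
    obtain c where cc: "\<forall>u\<in>prev_verts D i. y u = c" using Suc by auto
    obtain w where w: "w \<in> fst (D ! i)" "w \<in> prev_verts D i"
    proof (cases "is_dcycle (D ! i)")
      case True
      then have "card (fst (D ! i) \<inter> prev_verts D i) = 1"
        using ed i False unfolding ear_decomposition_def by auto
      then obtain w where "fst (D ! i) \<inter> prev_verts D i = {w}" using card_1_singletonE by blast
      then show ?thesis using that by auto
    next
      case nc: False
      then have "fst (D ! i) \<inter> prev_verts D i = {hd ?vs, last ?vs}" using hdlast False by auto
      then show ?thesis using that by auto
    qed
    then have "y (?vs ! 0) = c" using allv cc by auto
    then show ?thesis using allv cc by (auto simp: prev_verts_Suc)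
  qed
qed

definition Cm :: "nat \<Rightarrow> nat \<Rightarrow> real mat" where
  "Cm n l = mat n n (\<lambda>(i,j). if i = j \<and> i \<noteq> l then 1 else 0)"

lemma Cm_mult: "v \<in> carrier_vec n \<Longrightarrow> Cm n l *\<^sub>v v = vec n (\<lambda>i. if i = l then 0 else v $ i)"
proof (rule eq_vecI)
  fix i assume v: "v \<in> carrier_vec n" and i: "i < dim_vec (vec n (\<lambda>i. if i = l then 0 else v $ i))"
  then have i': "i < n" by simp
  have "(Cm n l *\<^sub>v v) $ i = (\<Sum>j = 0..<n. (if i = j \<and> i \<noteq> l then 1 else 0) * v $ j)"
    using v i' by (simp add: Cm_def scalar_prod_def)
  also have "\<dots> = (\<Sum>j = 0..<n. if j = i then (if i \<noteq> l then v $ i else 0) else 0)"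
    by (rule sum.cong) auto
  also have "\<dots> = (if i = l then 0 else v $ i)" using i' by (simp add: sum.delta)
  finally show "(Cm n l *\<^sub>v v) $ i = vec n (\<lambda>i. if i = l then 0 else v $ i) $ i" using i' by simp
qed (simp add: Cm_def)

lemma fin_arcs: "finite {(vs ! r, vs ! Suc r) |r. Suc r < length (vs::nat list)}"
proof -
  have "finite {r. Suc r < length vs}" by (rule finite_subset[of _ "{..<length vs}"]) auto
  then show ?thesis by (rule finite_image_set)
qed

lemma last_nth2: "length vs \<ge> 2 \<Longrightarrow> last vs = vs ! (length vs - 1)"
  by (subst last_conv_nth) auto

lemma hd_nth2: "length vs \<ge> 2 \<Longrightarrow> hd vs = vs ! 0"
  by (subst hd_conv_nth) auto

lemma dpath_finite: "is_dpath_of vs H \<Longrightarrow> finite (snd H)"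
  unfolding is_dpath_of_def using fin_arcs by auto

lemma dcycle_finite: "is_dcycle_of vs H \<Longrightarrow> finite (snd H)"
  unfolding is_dcycle_of_def using fin_arcs by auto

lemma dpath_card: assumes "is_dpath_of vs H" shows "length vs - 1 \<le> card (snd H)"
proof -
  have d: "distinct vs" using assms by (simp add: is_dpath_of_def)
  have sub: "(\<lambda>r. vs ! r) ` {..<length vs - 1} \<subseteq> fst ` snd H"
  proof
    fix u assume "u \<in> (\<lambda>r. vs ! r) ` {..<length vs - 1}"
    then obtain r where r: "r < length vs - 1" "u = vs ! r" by auto
    then have "(vs ! r, vs ! Suc r) \<in> snd H" using assms by (auto simp: is_dpath_of_def)
    then show "u \<in> fst ` snd H" using r by force
  qed
  have "length vs - 1 = card ((\<lambda>r. vs ! r) ` {..<length vs - 1})"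
    by (subst card_image) (auto intro: inj_on_subset[OF inj_on_nth[OF d]])
  also have "\<dots> \<le> card (fst ` snd H)"
    by (rule card_mono[OF finite_imageI[OF dpath_finite[OF assms]] sub])
  also have "\<dots> \<le> card (snd H)" by (rule card_image_le[OF dpath_finite[OF assms]])
  finally show ?thesis by simp
qed

lemma dcycle_card: assumes "is_dcycle_of vs H" shows "length vs \<le> card (snd H)"
proof -
  have d: "distinct vs" and l: "length vs \<ge> 2" using assms by (auto simp: is_dcycle_of_def)
  have sub: "(\<lambda>r. vs ! r) ` {..<length vs} \<subseteq> fst ` snd H"
  proof
    fix u assume "u \<in> (\<lambda>r. vs ! r) ` {..<length vs}"
    then obtain r where r: "r < length vs" "u = vs ! r" by auto
    show "u \<in> fst ` snd H"
    proof (cases "Suc r < length vs")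
      case True
      then have "(vs ! r, vs ! Suc r) \<in> snd H" using assms by (auto simp: is_dcycle_of_def)
      then show ?thesis using r by force
    next
      case False
      then have "r = length vs - 1" using r by simp
      then have "u = last vs" using r l by (simp add: last_nth2[OF l])
      moreover have "(last vs, hd vs) \<in> snd H" using assms by (auto simp: is_dcycle_of_def)
      ultimately show ?thesis by force
    qed
  qed
  have "length vs = card ((\<lambda>r. vs ! r) ` {..<length vs})"
    by (subst card_image) (auto intro: inj_on_subset[OF inj_on_nth[OF d]])
  also have "\<dots> \<le> card (fst ` snd H)"
    by (rule card_mono[OF finite_imageI[OF dcycle_finite[OF assms]] sub])
  also have "\<dots> \<le> card (snd H)" by (rule card_image_le[OF dcycle_finite[OF assms]])
  finally show ?thesis by simp
qed

lemma dpath_arc: "is_dpath_of vs H \<Longrightarrow> a \<in> snd H \<Longrightarrow> \<exists>r. Suc r < length vs \<and> fst a = vs ! r"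
  unfolding is_dpath_of_def by auto

lemma dcycle_arc: assumes "is_dcycle_of vs H" "a \<in> snd H" shows "\<exists>r. r < length vs \<and> fst a = vs ! r"
proof -
  have l: "length vs \<ge> 2" using assms by (auto simp: is_dcycle_of_def)
  show ?thesis
  proof (cases "a = (last vs, hd vs)")
    case True
    then show ?thesis using l by (intro exI[of _ "length vs - 1"]) (auto simp: last_nth2)
  next
    case False
    have "a \<in> {(vs ! r, vs ! Suc r) |r. Suc r < length vs}" using assms False unfolding is_dcycle_of_def by blast
    then obtain r where "Suc r < length vs" "a = (vs ! r, vs ! Suc r)" by blast
    then show ?thesis by (intro exI[of _ r]) auto
  qed
qed

theorem corollary4:
  fixes m n :: nat and A :: "(nat \<times> nat) set" and D :: "graph list"
  assumes "m \<ge> 2"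
    and "A \<subseteq> {1..m} \<times> {1..m}"
    and "\<forall>i. (i, i) \<notin> A"
    and "strongly_connected {1..m} A"
    and "ear_decomposition {1..m} A D"
    and "\<forall>E\<in>set D. ear_length E \<le> n"
  shows "\<exists>C :: nat \<times> nat \<Rightarrow> real mat.
           (\<forall>a\<in>A. dim_col (C a) = n \<and>
              (\<exists>v \<in> carrier_vec n. v \<noteq> 0\<^sub>v n \<and> C a *\<^sub>v v = 0\<^sub>v (dim_row (C a)))) \<and>
           well_configured n {1..m} A C"
proof -
  note ed = assms(5)
  define L where "L k = (SOME vs. if is_dcycle (D!k) then is_dcycle_of vs (D!k) else is_dpath_of vs (D!k))" for k
  have Lp: "if is_dcycle (D!k) then is_dcycle_of (L k) (D!k) else is_dpath_of (L k) (D!k)" if k: "k < length D" for k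
  proof -
    have "\<exists>vs. if is_dcycle (D!k) then is_dcycle_of vs (D!k) else is_dpath_of vs (D!k)"
    proof (cases "is_dcycle (D!k)")
      case True then show ?thesis by (auto simp: is_dcycle_def)
    next
      case False
      then have "k \<noteq> 0" using ed by (cases "k = 0") (auto simp: ear_decomposition_def)
      then have "is_dpath (D!k)" using ed k False by (auto simp: ear_decomposition_def)
      then show ?thesis using False by (auto simp: is_dpath_def)
    qed
    then show ?thesis unfolding L_def by (rule someI_ex)
  qed
  have Ldist: "distinct (L k)" and Llen: "length (L k) \<ge> 2" if "k < length D" for k
    using Lp[OF that] by (auto simp: is_dcycle_of_def is_dpath_of_def split: if_splits)
  have Larc: "(L k ! t, L k ! Suc t) \<in> snd (D!k)" if "k < length D" "Suc t < length (L k)" for k t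
    using Lp[OF that(1)] that(2) by (auto simp: is_dcycle_of_def is_dpath_of_def split: if_splits)
  have Lclose: "(L k ! (length (L k) - 1), L k ! 0) \<in> snd (D!k)" if "k < length D" "is_dcycle (D!k)" for k
  proof -
    have "(last (L k), hd (L k)) \<in> snd (D!k)" using Lp[OF that(1)] that(2) by (auto simp: is_dcycle_of_def)
    then show ?thesis using Llen[OF that(1)] by (simp add: last_nth2 hd_nth2)
  qed
  have Aun: "(\<Union>i<length D. snd (D ! i)) = A" using ed unfolding ear_decomposition_def by (elim conjE)
  define eo where "eo a = (SOME k. k < length D \<and> a \<in> snd (D!k))" for a :: "nat \<times> nat"
  define lab where "lab a = (SOME t. t < length (L (eo a)) \<and> L (eo a) ! t = fst a)" for a
  have eo: "eo a = k" if "k < length D" "a \<in> snd (D!k)" for a k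
  proof -
    have h: "eo a < length D \<and> a \<in> snd (D!(eo a))" unfolding eo_def by (rule someI[where P="\<lambda>k. k < length D \<and> a \<in> snd (D!k)"]) (use that in auto)
    have disj: "\<forall>i<length D. \<forall>k<length D. i \<noteq> k \<longrightarrow> snd (D ! i) \<inter> snd (D ! k) = {}"
      using ed unfolding ear_decomposition_def by (elim conjE)
    show ?thesis
    proof (rule ccontr)
      assume ne: "eo a \<noteq> k"
      have "snd (D ! eo a) \<inter> snd (D ! k) = {}" using disj h that(1) ne by simp
      then show False using h that(2) by blast
    qed
  qed
  have labeq: "lab a = t" if "k < length D" "a \<in> snd (D!k)" "t < length (L k)" "L k ! t = fst a" for a k t
  proof -
    have "lab a < length (L k) \<and> L k ! lab a = fst a" unfolding lab_def eo[OF that(1,2)]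
      by (rule someI[where P="\<lambda>t. t < length (L k) \<and> L k ! t = fst a"]) (use that in auto)
    then have h1: "lab a < length (L k)" and h2: "L k ! lab a = L k ! t" using that(4) by simp_all
    show ?thesis using nth_eq_iff_index_eq[OF Ldist[OF that(1)] h1 that(3)] h2 by simp
  qed
  have labn: "lab a < n" if "a \<in> A" for a
  proof -
    have "a \<in> (\<Union>i<length D. snd (D ! i))" using that Aun by simp
    then obtain k where k: "k < length D" "a \<in> snd (D!k)" by auto
    have "ear_length (D!k) \<le> n" using assms(6) nth_mem[OF k(1)] by blast
    then have en: "card (snd (D!k)) \<le> n" unfolding ear_length_def .
    show ?thesis
    proof (cases "is_dcycle (D!k)")
      case True
      then have c: "is_dcycle_of (L k) (D!k)" using Lp[OF k(1)] by simp
      obtain r where r: "r < length (L k)" "fst a = L k ! r" using dcycle_arc[OF c k(2)] by blast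
      have "lab a = r" using labeq[OF k r(1) r(2)[symmetric]] .
      then show ?thesis using r(1) dcycle_card[OF c] en by linarith
    next
      case False
      then have c: "is_dpath_of (L k) (D!k)" using Lp[OF k(1)] by simp
      obtain r where r: "Suc r < length (L k)" "fst a = L k ! r" using dpath_arc[OF c k(2)] by blast
      have "lab a = r" using labeq[OF k _ r(2)[symmetric]] r(1) by simp
      then show ?thesis using r(1) dpath_card[OF c] en by linarith
    qed
  qed
  define C where "C a = Cm n (lab a)" for a
  have part1: "\<forall>a\<in>A. dim_col (C a) = n \<and>
              (\<exists>v \<in> carrier_vec n. v \<noteq> 0\<^sub>v n \<and> C a *\<^sub>v v = 0\<^sub>v (dim_row (C a)))"
  proof
    fix a assume a: "a \<in> A"
    have ln: "lab a < n" using labn[OF a] .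
    have "(unit_vec n (lab a) :: real vec) \<noteq> 0\<^sub>v n"
    proof
      assume h: "(unit_vec n (lab a) :: real vec) = 0\<^sub>v n"
      have "(unit_vec n (lab a) :: real vec) $ lab a = 0\<^sub>v n $ lab a" by (simp only: h)
      then show False using ln by simp
    qed
    moreover have "C a *\<^sub>v unit_vec n (lab a) = 0\<^sub>v (dim_row (C a))"
      unfolding C_def by (subst Cm_mult) (auto simp: Cm_def unit_vec_def intro!: eq_vecI)
    ultimately show "dim_col (C a) = n \<and>
              (\<exists>v \<in> carrier_vec n. v \<noteq> 0\<^sub>v n \<and> C a *\<^sub>v v = 0\<^sub>v (dim_row (C a)))"
      by (auto simp: C_def Cm_def intro!: bexI[of _ "unit_vec n (lab a) :: real vec"])
  qed
  have V: "prev_verts D (length D) = {1..m}" using ed unfolding ear_decomposition_def prev_verts_def by simp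
  have part2: "well_configured n {1..m} A C"
    unfolding well_configured_def
  proof (intro allI impI ballI)
    fix x :: "nat \<Rightarrow> real vec" and i j
    assume xc: "\<forall>i\<in>{1..m}. x i \<in> carrier_vec n"
      and cons: "\<forall>(j, i)\<in>A. C (j, i) *\<^sub>v x i = C (j, i) *\<^sub>v x j"
      and i: "i \<in> {1..m}" and j: "j \<in> {1..m}"
    have coord: "x (snd a) $ s = x (fst a) $ s" if a: "a \<in> A" "s < n" "s \<noteq> lab a" for a s
    proof -
      obtain u w where uw: "a = (u, w)" by force
      have u: "u \<in> {1..m}" and w: "w \<in> {1..m}" using assms(2) a uw by auto
      have "C (u, w) *\<^sub>v x w = C (u, w) *\<^sub>v x u" using cons a uw by auto
      then have "(C (u, w) *\<^sub>v x w) $ s = (C (u, w) *\<^sub>v x u) $ s" by simp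
      then show ?thesis using xc u w a uw unfolding C_def by (simp add: Cm_mult)
    qed
    have "x i \<in> carrier_vec n" using xc i by blast
    then have xi: "dim_vec (x i) = n" by (rule carrier_vecD)
    have "x j \<in> carrier_vec n" using xc j by blast
    then have xj: "dim_vec (x j) = n" by (rule carrier_vecD)
    show "x i = x j"
    proof (rule eq_vecI)
      show "dim_vec (x i) = dim_vec (x j)" using xi xj by simp
    next
      fix s assume "s < dim_vec (x j)"
      then have s: "s < n" using xj by simp
      have "\<exists>c. \<forall>u\<in>prev_verts D (length D). (\<lambda>v. x v $ s) u = c"
      proof (rule ears_const[OF ed, where L=L and s=s])
        show "if is_dcycle (D!k) then is_dcycle_of (L k) (D!k) else is_dpath_of (L k) (D!k)"
          if "k < length D" for k using Lp[OF that] .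
      next
        fix k t assume k: "k < length D" and t: "Suc t < length (L k)" "t \<noteq> s"
        have arc: "(L k ! t, L k ! Suc t) \<in> snd (D!k)" using Larc[OF k t(1)] .
        then have "(L k ! t, L k ! Suc t) \<in> (\<Union>i<length D. snd (D ! i))" using k by auto
        then have inA: "(L k ! t, L k ! Suc t) \<in> A" using Aun by simp
        have "lab (L k ! t, L k ! Suc t) = t" using labeq[OF k arc, of t] t by simp
        then show "x (L k ! t) $ s = x (L k ! Suc t) $ s" using coord[OF inA s] t by simp
      next
        fix k assume k: "k < length D" and cy: "is_dcycle (D!k)" and ns: "s \<noteq> length (L k) - 1"
        have arc: "(L k ! (length (L k) - 1), L k ! 0) \<in> snd (D!k)" using Lclose[OF k cy] .
        then have "(L k ! (length (L k) - 1), L k ! 0) \<in> (\<Union>i<length D. snd (D ! i))" using k by auto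
        then have inA: "(L k ! (length (L k) - 1), L k ! 0) \<in> A" using Aun by simp
        have "lab (L k ! (length (L k) - 1), L k ! 0) = length (L k) - 1"
          using labeq[OF k arc, of "length (L k) - 1"] Llen[OF k] by simp
        then have "x (L k ! 0) $ s = x (L k ! (length (L k) - 1)) $ s" using coord[OF inA s] ns by simp
        then show "x (last (L k)) $ s = x (hd (L k)) $ s" using Llen[OF k] by (simp add: last_nth2 hd_nth2)
      qed simp
      then show "x i $ s = x j $ s" using i j V by auto
    qed
  qed
  show ?thesis using part1 part2 by blast
qed

end
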